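(* In the M/G/1 setting below: (i) For a fixed fee $p\in[0,R-C/\mu)$: (a) if $\lambda\le\mathbb{E}[\Lambda]$, then $\mathrm{Rev}^S(p)\le\mathrm{Rev}^C(p)$; (b) if $\mathbb{E}[\Lambda]<\lambda\le\bar\lambda$ and $\xi(p)\ge\lambda$, then $\mathrm{Rev}^S(p)\le\mathrm{Rev}^C(p)$; (c) if $\lambda>\bar\lambda$ and $\xi(p)\ge\bar\lambda$, then $\mathrm{Rev}^S(p)\ge\mathrm{Rev}^C(p)$. (ii) As functions of the joining probability $q$: if $\lambda>\mathbb{E}[\Lambda]$, there exists $q_0>0$ such that $\mathrm{Rev}^S(q)>\mathrm{Rev}^C(q)$ for all $q\in(0,q_0)$; if $\lambda<\mathbb{E}[\Lambda]$, there exists $q_0>0$ such that $\mathrm{Rev}^S(q)<\mathrm{Rev}^C(q)$ for all $q\in(0,q_0)$.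
   Context: Setting: an M/G/1 queue with true (deterministic) Poisson arrival rate $\lambda>0$ and i.i.d. service times $S$ with $\mathbb{E}[S]=1/\mu$, $\mathbb{E}[S^2]=s^2$; for $0\le x<\mu$, $W(x)=\frac{s^2x}{2(1-x/\mu)}+\frac1\mu$ is the expected time in system at effective arrival rate $x$. Each served customer receives reward $R$, pays fee $p$, and incurs waiting cost $C>0$ per unit time, with $R\ge C/\mu$. Customers' beliefs about the arrival rate are described by a non-degenerate nonnegative random variable $\Lambda$ whose support has minimum $\lambda_{\min}$ and maximum $\lambda_{\max}$, with $0\le\lambda_{\min}<\lambda<\lambda_{\max}<\mu$. For $0\le p<R-C/\mu$, $\xi(p)\in(0,\mu)$ is the unique solution of $W(\xi)=(R-p)/C$, i.e. $\xi(p)=\left(\frac{Cs^2}{2(R-p-C/\mu)}+\frac1\mu\right)^{-1}$. Classical case: $q^C(p)=\min\{\xi(p)/\lambda,1\}$ and $\mathrm{Rev}^C(p)=p\lambda q^C(p)$. Shared belief case: $q^S(p)=1$ if $C\,\mathbb{E}[W(\Lambda)]\le R-p$, otherwise $q^S(p)$ is the unique $q\in[0,1)$ with $C\,\mathbb{E}[W(q\Lambda)]=R-p$; $\mathrm{Rev}^S(p)=p\lambda q^S(p)$. The threshold $\bar\lambda\in[0,\mu)$ is defined by $W(\bar\lambda)=\mathbb{E}[W(\Lambda)]$ (so $q^S(p)=1$ iff $\xi(p)\ge\bar\lambda$). As functions of $q\in[0,1]$: $\mathrm{Rev}^C(q)=q\lambda(R-C\,W(q\lambda))$ and $\mathrm{Rev}^S(q)=q\lambda\,\mathbb{E}[R-C\,W(q\Lambda)]$.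 *)

theory Defs
  imports "HOL-Probability.Probability"
begin

text \<open>Expected time in system at effective arrival rate x (M/G/1, Pollaczek-Khinchine).
  s2 = E[S^2], mu = 1/E[S].\<close>
definition W :: "real \<Rightarrow> real \<Rightarrow> real \<Rightarrow> real" where
  "W s2 mu x = s2 * x / (2 * (1 - x / mu)) + 1 / mu"

text \<open>xi(p): unique solution of W(xi) = (R - p)/C, given in closed form.\<close>
definition xi :: "real \<Rightarrow> real \<Rightarrow> real \<Rightarrow> real \<Rightarrow> real \<Rightarrow> real" where
  "xi s2 mu R C p = inverse (C * s2 / (2 * (R - p - C / mu)) + 1 / mu)"

definition dist_support :: "real measure \<Rightarrow> real set" where
  "dist_support D = {x. \<forall>e>0. measure D {x - e <..< x + e} > 0}"

definition qC :: "real \<Rightarrow> real \<Rightarrow> real \<Rightarrow> real \<Rightarrow> real \<Rightarrow> real \<Rightarrow> real" where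
  "qC s2 mu R C lam p = min (xi s2 mu R C p / lam) 1"

definition RevC :: "real \<Rightarrow> real \<Rightarrow> real \<Rightarrow> real \<Rightarrow> real \<Rightarrow> real \<Rightarrow> real" where
  "RevC s2 mu R C lam p = p * lam * qC s2 mu R C lam p"

text \<open>Shared-belief joining probability and revenue; D is the distribution of Lambda.\<close>
definition qS :: "real \<Rightarrow> real \<Rightarrow> real \<Rightarrow> real \<Rightarrow> real measure \<Rightarrow> real \<Rightarrow> real" where
  "qS s2 mu R C D p =
     (if C * (\<integral>x. W s2 mu x \<partial>D) \<le> R - p then 1
      else (THE q. 0 \<le> q \<and> q < 1 \<and> C * (\<integral>x. W s2 mu (q * x) \<partial>D) = R - p))"

definition RevS :: "real \<Rightarrow> real \<Rightarrow> real \<Rightarrow> real \<Rightarrow> real \<Rightarrow> real measure \<Rightarrow> real \<Rightarrow> real" where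
  "RevS s2 mu R C lam D p = p * lam * qS s2 mu R C D p"

definition lambda_bar :: "real \<Rightarrow> real \<Rightarrow> real measure \<Rightarrow> real" where
  "lambda_bar s2 mu D = (THE l. 0 \<le> l \<and> l < mu \<and> W s2 mu l = (\<integral>x. W s2 mu x \<partial>D))"

definition RevCq :: "real \<Rightarrow> real \<Rightarrow> real \<Rightarrow> real \<Rightarrow> real \<Rightarrow> real \<Rightarrow> real" where
  "RevCq s2 mu R C lam q = q * lam * (R - C * W s2 mu (q * lam))"

definition RevSq :: "real \<Rightarrow> real \<Rightarrow> real \<Rightarrow> real \<Rightarrow> real \<Rightarrow> real measure \<Rightarrow> real \<Rightarrow> real" where
  "RevSq s2 mu R C lam D q = q * lam * (\<integral>x. (R - C * W s2 mu (q * x)) \<partial>D)"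

end

theory Submission
  imports Defs
begin

lemma W_alt: assumes "mu > 0" "y < mu"
  shows "W s2 mu y = s2/2 * (y + y^2/(mu - y)) + 1/mu"
  using assms by (simp add: W_def field_simps power2_eq_square)

lemma W_alt2: assumes "mu > 0" "y < mu"
  shows "W s2 mu y = s2/2 * (mu^2/(mu - y) - mu) + 1/mu"
  using assms by (simp add: W_def field_simps power2_eq_square)

lemma W_diff: assumes "mu > 0" "y1 < mu" "y2 < mu"
  shows "W s2 mu y2 - W s2 mu y1 = s2/2 * (mu^2 * (y2 - y1) / ((mu - y1) * (mu - y2)))"
proof -
  have n: "mu - y1 \<noteq> 0" "mu - y2 \<noteq> 0" using assms by auto
  have "W s2 mu y2 - W s2 mu y1 = s2/2 * (mu^2/(mu - y2) - mu^2/(mu - y1))"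
    using assms by (simp add: W_alt2 algebra_simps)
  also have "mu^2/(mu - y2) - mu^2/(mu - y1) = mu^2 * (y2 - y1) / ((mu - y1) * (mu - y2))"
    using n by (simp add: field_simps)
  finally show ?thesis .
qed

lemma W_lower: assumes "mu > 0" "0 \<le> y1" "y1 \<le> y2" "y2 < mu" "s2 \<ge> 0"
  shows "s2/2 * (y2 - y1) \<le> W s2 mu y2 - W s2 mu y1"
proof -
  have p: "0 < (mu - y1) * (mu - y2)" using assms by simp
  have le: "(mu - y1) * (mu - y2) \<le> mu^2" using assms
    by (simp add: power2_eq_square mult_mono)
  have "(y2 - y1) * ((mu - y1) * (mu - y2)) \<le> mu^2 * (y2 - y1)"
    using le assms by (simp add: mult_left_mono mult.commute)
  then have "(y2 - y1) \<le> mu^2 * (y2 - y1) / ((mu - y1) * (mu - y2))"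
    using p by (simp add: le_divide_eq)
  then have "s2/2 * (y2 - y1) \<le> s2/2 * (mu^2 * (y2 - y1) / ((mu - y1) * (mu - y2)))"
    using assms by (intro mult_left_mono) auto
  then show ?thesis using assms by (subst W_diff) auto
qed

lemma W_upper: assumes "mu > 0" "0 \<le> y1" "y1 \<le> y2" "y2 \<le> Y" "Y < mu" "s2 \<ge> 0"
  shows "W s2 mu y2 - W s2 mu y1 \<le> s2/2 * mu^2 / (mu - Y)^2 * (y2 - y1)"
proof -
  have p: "0 < (mu - Y)^2" using assms by simp
  have le: "(mu - Y)^2 \<le> (mu - y1) * (mu - y2)" using assms
    by (simp add: power2_eq_square mult_mono)
  have "mu^2 * (y2 - y1) / ((mu - y1) * (mu - y2)) \<le> mu^2 * (y2 - y1) / (mu - Y)^2"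
    using le p assms by (intro divide_left_mono) auto
  then have "s2/2 * (mu^2 * (y2 - y1) / ((mu - y1) * (mu - y2))) \<le> s2/2 * (mu^2 * (y2 - y1) / (mu - Y)^2)"
    using assms by (intro mult_left_mono) auto
  then show ?thesis using assms by (subst W_diff) auto
qed

lemma W_strict: assumes "mu > 0" "0 \<le> y1" "y1 < y2" "y2 < mu" "s2 > 0"
  shows "W s2 mu y1 < W s2 mu y2"
proof -
  have "0 < s2/2 * (y2 - y1)" using assms by simp
  then show ?thesis using W_lower[of mu y1 y2 s2] assms by linarith
qed

lemma W_mono: assumes "mu > 0" "0 \<le> y1" "y1 \<le> y2" "y2 < mu" "s2 \<ge> 0"
  shows "W s2 mu y1 \<le> W s2 mu y2"
proof -
  have "0 \<le> s2/2 * (y2 - y1)" using assms by simp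
  then show ?thesis using W_lower[of mu y1 y2 s2] assms by linarith
qed

lemma W_tangent: assumes "mu > 0" "y < mu" "y0 < mu" "s2 \<ge> 0"
  shows "W s2 mu y0 + s2/2 * mu^2 / (mu - y0)^2 * (y - y0) \<le> W s2 mu y"
proof -
  have u: "mu - y > 0" "mu - y0 > 0" using assms by auto
  have "1/(mu - y0) + (y - y0)/(mu - y0)^2 \<le> 1/(mu - y)"
  proof -
    define u w where "u = mu - y" and "w = mu - y0"
    have uv: "u > 0" "w > 0" "y - y0 = w - u" using u by (auto simp: u_def w_def)
    have e: "w^2 - (2* w - u) * u = (w - u)^2"
      by (simp add: power2_eq_square algebra_simps)
    have k: "(2* w - u) * u \<le> w^2"
      using e zero_le_power2[of "w - u"] by linarith
    have e0: "1/w = w/w^2" using uv by (simp add: power2_eq_square)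
    have e2: "1/w + (w - u)/w^2 = (2* w - u)/w^2"
      unfolding e0 by (simp add: add_divide_distrib[symmetric])
    have "((2* w - u) * u)/(w^2 * u) \<le> w^2/(w^2 * u)"
      by (rule divide_right_mono[OF k]) (use uv in simp)
    moreover have "((2* w - u) * u)/(w^2 * u) = (2* w - u)/w^2" using uv by simp
    moreover have "w^2/(w^2 * u) = 1/u" using uv by simp
    ultimately have "(2* w - u)/w^2 \<le> 1/u" by simp
    then have "1/w + (w - u)/w^2 \<le> 1/u" using e2 by simp
    then show ?thesis by (simp add: u_def w_def)
  qed
  then have "s2/2 * mu^2 * (1/(mu - y0) + (y - y0)/(mu - y0)^2) \<le> s2/2 * mu^2 * (1/(mu - y))"
    using assms by (intro mult_left_mono) auto
  then have i: "s2/2 * mu^2 * (1/(mu - y0)) + s2/2 * mu^2 * ((y - y0)/(mu - y0)^2) \<le> s2/2 * mu^2 * (1/(mu - y))"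
    by (simp add: distrib_left)
  have n: "mu - y \<noteq> 0" "mu - y0 \<noteq> 0" using assms by auto
  have e1: "W s2 mu y = s2/2 * mu^2 * (1/(mu - y)) - s2/2*mu + 1/mu"
    using assms by (simp add: W_alt2 algebra_simps)
  have e2: "W s2 mu y0 = s2/2 * mu^2 * (1/(mu - y0)) - s2/2*mu + 1/mu"
    using assms by (simp add: W_alt2 algebra_simps)
  have e3: "s2/2 * mu^2 / (mu - y0)^2 * (y - y0) = s2/2 * mu^2 * ((y - y0)/(mu - y0)^2)"
    by simp
  show ?thesis using i e1 e2 e3 by linarith
qed


lemma qx_le: "0 \<le> q \<Longrightarrow> q \<le> 1 \<Longrightarrow> 0 \<le> x \<Longrightarrow> x \<le> l \<Longrightarrow> q*x \<le> (l::real)"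
  using mult_left_le_one_le[of x q] by linarith

lemma W_zero: "W s2 mu 0 = 1/mu" by (simp add: W_def)

lemma W_quad: assumes "mu > 0" "0 \<le> q" "q \<le> 1" "0 \<le> x" "x \<le> lmax" "lmax < mu" "s2 \<ge> 0"
  shows "W s2 mu (q*x) \<le> s2/2 * (q*x + q^2 * (lmax^2/(mu - lmax))) + 1/mu"
proof -
  have qx: "0 \<le> q*x" "q*x \<le> q*lmax" "q*lmax \<le> lmax"
    using assms by (auto intro: mult_left_mono mult_left_le_one_le)
  have "(q*x)^2 \<le> (q*lmax)^2" using qx by (intro power_mono) auto
  also have "\<dots> = q^2 * lmax^2" by (simp add: power_mult_distrib)
  finally have n: "(q*x)^2 \<le> q^2 * lmax^2" .
  have d: "0 < mu - lmax" "mu - lmax \<le> mu - q*x" using assms qx by auto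
  have "(q*x)^2/(mu - q*x) \<le> q^2 * lmax^2/(mu - lmax)"
    by (rule frac_le) (use n d in auto)
  then have "s2/2 * (q*x + (q*x)^2/(mu - q*x)) \<le> s2/2 * (q*x + q^2 * (lmax^2/(mu - lmax)))"
    using assms by (intro mult_left_mono) auto
  then show ?thesis using assms qx by (subst W_alt) auto
qed

lemma W_lin_lower: assumes "mu > 0" "0 \<le> y" "y < mu" "s2 \<ge> 0"
  shows "s2/2 * y + 1/mu \<le> W s2 mu y"
  using W_lower[of mu 0 y s2] assms by (simp add: W_zero)

locale qsetup = prob_space D for D :: "real measure" +
  fixes s2 mu lmax :: real
  assumes sets_D: "sets D = sets borel" and s2_pos: "s2 > 0" and mu_pos: "mu > 0"
    and lmax_lt: "lmax < mu" and lmax_nn: "0 \<le> lmax"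
    and range: "AE x in D. 0 \<le> x \<and> x \<le> lmax"
    and nondeg0: "\<not> (AE x in D. x = 0)"
begin

definition g :: "real \<Rightarrow> real" where "g q = expectation (\<lambda>x. W s2 mu (q*x))"

abbreviation "m \<equiv> expectation (\<lambda>x. x)"

lemma meas_W: "(\<lambda>x. W s2 mu (q*x)) \<in> borel_measurable D"
proof -
  show ?thesis by (subst measurable_cong_sets[OF sets_D refl]) (unfold W_def, measurable)
qed

lemma meas_id: "(\<lambda>x. x) \<in> borel_measurable D"
  by (subst measurable_cong_sets[OF sets_D refl]) simp

lemma int_id: "integrable D (\<lambda>x. x)"
proof (rule integrable_const_bound[where B=lmax])
  show "AE x in D. norm x \<le> lmax" using range by eventually_elim auto
qed (rule meas_id)

lemma mean_pos: "0 < m"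
proof -
  have nn: "AE x in D. 0 \<le> x" using range by eventually_elim auto
  have "0 \<le> m" using nn by (rule integral_nonneg_AE)
  moreover have "m \<noteq> 0" using integral_nonneg_eq_0_iff_AE[OF int_id nn] nondeg0 by simp
  ultimately show ?thesis by simp
qed

lemma int_W: assumes "0 \<le> q" "q \<le> 1" shows "integrable D (\<lambda>x. W s2 mu (q*x))"
proof (rule integrable_const_bound[where B="W s2 mu lmax"])
  show "AE x in D. norm (W s2 mu (q*x)) \<le> W s2 mu lmax"
    using range
  proof eventually_elim
    case (elim x)
    have qx: "0 \<le> q*x" "q*x \<le> lmax" using elim assms
      by (auto intro: qx_le)
    have "0 \<le> W s2 mu (q*x)"
      using W_lin_lower[of mu "q*x" s2] qx mu_pos s2_pos lmax_lt
      by (smt (verit) divide_pos_pos mult_nonneg_nonneg)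
    moreover have "W s2 mu (q*x) \<le> W s2 mu lmax"
      using W_mono[of mu "q*x" lmax s2] qx mu_pos s2_pos lmax_lt by auto
    ultimately show ?case by simp
  qed
qed (rule meas_W)

lemma m_le: "m \<le> lmax"
proof -
  have "m \<le> expectation (\<lambda>x. lmax)"
    by (rule integral_mono_AE[OF int_id]) (use range in auto)
  then show ?thesis by (simp add: prob_space)
qed

lemma g0: "g 0 = 1/mu" by (simp add: g_def W_zero prob_space)

lemma g_lower: assumes "0 \<le> q1" "q1 \<le> q2" "q2 \<le> 1"
  shows "g q1 + s2/2 * (q2 - q1) * m \<le> g q2"
proof -
  have "expectation (\<lambda>x. W s2 mu (q1*x) + (s2/2 * (q2 - q1)) * x) \<le> g q2"
    unfolding g_def
  proof (rule integral_mono_AE)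
    show "integrable D (\<lambda>x. W s2 mu (q1*x) + (s2/2 * (q2 - q1)) * x)"
      using int_W int_id assms by auto
    show "integrable D (\<lambda>x. W s2 mu (q2*x))" using int_W assms by auto
    show "AE x in D. W s2 mu (q1*x) + (s2/2 * (q2 - q1)) * x \<le> W s2 mu (q2*x)"
      using range
    proof eventually_elim
      case (elim x)
      have qx: "0 \<le> q1*x" "q1*x \<le> q2*x" "q2*x \<le> lmax" using elim assms
        by (auto intro: qx_le mult_right_mono)
      have "s2/2 * (q2*x - q1*x) \<le> W s2 mu (q2*x) - W s2 mu (q1*x)"
        using W_lower[of mu "q1*x" "q2*x" s2] qx mu_pos s2_pos lmax_lt by auto
      moreover have "s2/2 * (q2 - q1) * x = s2/2 * (q2*x - q1*x)" by (simp add: right_diff_distrib left_diff_distrib)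
      ultimately show ?case by linarith
    qed
  qed
  moreover have "expectation (\<lambda>x. W s2 mu (q1*x) + (s2/2 * (q2 - q1)) * x) = g q1 + s2/2 * (q2 - q1) * m"
    by (subst Bochner_Integration.integral_add) (use int_W int_id assms in \<open>auto simp: g_def\<close>)
  ultimately show ?thesis by simp
qed

lemma g_mono_strict: assumes "0 \<le> q1" "q1 < q2" "q2 \<le> 1" shows "g q1 < g q2"
proof -
  have "0 < s2/2 * (q2 - q1) * m" using assms s2_pos mean_pos by simp
  then show ?thesis using g_lower[of q1 q2] assms by linarith
qed

definition "Lg = s2/2 * mu^2 / (mu - lmax)^2 * lmax"

lemma g_upper: assumes "0 \<le> q1" "q1 \<le> q2" "q2 \<le> 1"
  shows "g q2 \<le> g q1 + Lg * (q2 - q1)"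
proof -
  have "g q2 \<le> expectation (\<lambda>x. W s2 mu (q1*x) + Lg * (q2 - q1))"
    unfolding g_def
  proof (rule integral_mono_AE)
    show "integrable D (\<lambda>x. W s2 mu (q1*x) + Lg * (q2 - q1))"
      using int_W assms by auto
    show "integrable D (\<lambda>x. W s2 mu (q2*x))" using int_W assms by auto
    show "AE x in D. W s2 mu (q2*x) \<le> W s2 mu (q1*x) + Lg * (q2 - q1)"
      using range
    proof eventually_elim
      case (elim x)
      have qx: "0 \<le> q1*x" "q1*x \<le> q2*x" "q2*x \<le> lmax" using elim assms
        by (auto intro: qx_le mult_right_mono)
      have a1: "W s2 mu (q2*x) - W s2 mu (q1*x) \<le> s2/2 * mu^2 / (mu - lmax)^2 * (q2*x - q1*x)"
        using W_upper[of mu "q1*x" "q2*x" lmax s2] qx mu_pos s2_pos lmax_lt by auto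
      have h: "q2*x - q1*x \<le> (q2 - q1)*lmax"
      proof -
        have "(q2 - q1)*x \<le> (q2 - q1)*lmax" using elim assms by (intro mult_left_mono) auto
        then show ?thesis by (simp add: left_diff_distrib)
      qed
      have a2: "s2/2 * mu^2 / (mu - lmax)^2 * (q2*x - q1*x) \<le> s2/2 * mu^2 / (mu - lmax)^2 * ((q2 - q1) * lmax)"
        using h s2_pos by (intro mult_left_mono) auto
      have a3: "s2/2 * mu^2 / (mu - lmax)^2 * ((q2 - q1) * lmax) = Lg * (q2 - q1)"
        by (simp add: Lg_def algebra_simps)
      show ?case using a1 a2 a3 by linarith
    qed
  qed
  also have "expectation (\<lambda>x. W s2 mu (q1*x) + Lg * (q2 - q1)) = g q1 + Lg * (q2 - q1)"
    using int_W assms by (simp add: g_def prob_space)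
  finally show ?thesis .
qed

lemma Lg_nn: "0 \<le> Lg" unfolding Lg_def using s2_pos lmax_nn by simp

lemma g_cont: "continuous_on {0..1} g"
proof (rule lipschitz_on_continuous_on)
  show "Lg-lipschitz_on {0..1} g"
  proof (rule lipschitz_onI)
    fix x y :: real assume xy: "x \<in> {0..1}" "y \<in> {0..1}"
    show "dist (g x) (g y) \<le> Lg * dist x y"
    proof (cases "x \<le> y")
      case True
      have "0 \<le> s2/2 * (y - x) * m" using True s2_pos mean_pos by simp
      then show ?thesis using g_upper[of x y] g_lower[of x y] xy True
        by (auto simp: dist_real_def abs_le_iff)
    next
      case False
      have "0 \<le> s2/2 * (x - y) * m" using False s2_pos mean_pos by simp
      then show ?thesis using g_upper[of y x] g_lower[of y x] xy False
        by (auto simp: dist_real_def abs_le_iff)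
    qed
  qed (rule Lg_nn)
qed

lemma g_jensen: assumes "0 \<le> q" "q \<le> 1" shows "W s2 mu (q*m) \<le> g q"
proof -
  have qm: "0 \<le> q*m" "q*m \<le> lmax" using assms mean_pos m_le
    by (auto intro: qx_le)
  define c where "c = s2/2 * mu^2 / (mu - q*m)^2"
  have "expectation (\<lambda>x. (W s2 mu (q*m) - c*q*m) + (c*q) * x) \<le> g q"
    unfolding g_def
  proof (rule integral_mono_AE)
    show "integrable D (\<lambda>x. (W s2 mu (q*m) - c*q*m) + (c*q) * x)"
      using int_id by auto
    show "integrable D (\<lambda>x. W s2 mu (q*x))" using int_W assms by auto
    show "AE x in D. (W s2 mu (q*m) - c*q*m) + (c*q) * x \<le> W s2 mu (q*x)"
      using range
    proof eventually_elim
      case (elim x)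
      have qx: "q*x \<le> lmax" using elim assms by (auto intro: qx_le)
      have "W s2 mu (q*m) + c * (q*x - q*m) \<le> W s2 mu (q*x)"
        unfolding c_def using W_tangent[of mu "q*x" "q*m" s2] qx qm mu_pos s2_pos lmax_lt by auto
      then show ?case by (simp add: algebra_simps)
    qed
  qed
  moreover have "expectation (\<lambda>x. (W s2 mu (q*m) - c*q*m) + (c*q) * x) = W s2 mu (q*m)"
    using int_id by (simp add: prob_space)
  ultimately show ?thesis by simp
qed

lemma g_quad: assumes "0 \<le> q" "q \<le> 1"
  shows "g q \<le> s2/2 * (q*m + q^2 * (lmax^2/(mu - lmax))) + 1/mu"
proof -
  have "g q \<le> expectation (\<lambda>x. (s2/2 * q^2 * (lmax^2/(mu - lmax)) + 1/mu) + (s2/2*q) * x)"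
    unfolding g_def
  proof (rule integral_mono_AE)
    show "integrable D (\<lambda>x. (s2/2 * q^2 * (lmax^2/(mu - lmax)) + 1/mu) + (s2/2*q) * x)"
      using int_id by auto
    show "integrable D (\<lambda>x. W s2 mu (q*x))" using int_W assms by auto
    show "AE x in D. W s2 mu (q*x) \<le> (s2/2 * q^2 * (lmax^2/(mu - lmax)) + 1/mu) + (s2/2*q) * x"
      using range
    proof eventually_elim
      case (elim x)
      then show ?case using W_quad[of mu q x lmax s2] assms mu_pos lmax_lt s2_pos
        by (simp add: algebra_simps)
    qed
  qed
  also have "\<dots> = s2/2 * (q*m + q^2 * (lmax^2/(mu - lmax))) + 1/mu"
    using int_id by (simp add: algebra_simps prob_space)
  finally show ?thesis .
qed

lemma g_lin: assumes "0 \<le> q" "q \<le> 1" shows "s2/2 * q * m + 1/mu \<le> g q"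
  using g_lower[of 0 q] assms g0 by simp

lemma g1: "g 1 = expectation (\<lambda>x. W s2 mu x)" by (simp add: g_def)

lemma root: assumes "1/mu < a" "a < g 1" shows "\<exists>!q. 0 \<le> q \<and> q < 1 \<and> g q = a"
proof -
  obtain q where q: "0 \<le> q" "q \<le> 1" "g q = a"
    using IVT'[of g 0 a 1] g0 assms g_cont by auto
  have "q \<noteq> 1" using q assms by auto
  then have q1: "q < 1" using q by auto
  show ?thesis
  proof (rule ex1I[of _ q])
    show "0 \<le> q \<and> q < 1 \<and> g q = a" using q q1 by auto
    fix r assume r: "0 \<le> r \<and> r < 1 \<and> g r = a"
    show "r = q"
    proof (rule ccontr)
      assume "r \<noteq> q"
      then have "r < q \<or> q < r" by auto
      then show False using g_mono_strict[of r q] g_mono_strict[of q r] q q1 r by auto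
    qed
  qed
qed

lemma qS_root: assumes C: "C > 0" and lo: "C/mu < Rp" and hi: "\<not> C * expectation (\<lambda>x. W s2 mu x) \<le> Rp"
  defines "q \<equiv> THE q. 0 \<le> q \<and> q < 1 \<and> C * expectation (\<lambda>x. W s2 mu (q*x)) = Rp"
  shows "0 \<le> q \<and> q < 1 \<and> C * g q = Rp"
proof -
  have a1: "1/mu < Rp/C" using lo C mu_pos by (simp add: field_simps)
  have a2: "Rp/C < g 1" using hi C by (simp add: g1 field_simps)
  have eq: "(C * expectation (\<lambda>x. W s2 mu (r*x)) = Rp) = (g r = Rp/C)" for r
    using C by (auto simp: g_def field_simps)
  have "\<exists>!q. 0 \<le> q \<and> q < 1 \<and> C * expectation (\<lambda>x. W s2 mu (q*x)) = Rp"
    unfolding eq by (rule root[OF a1 a2])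
  from theI'[OF this] show ?thesis unfolding q_def by (simp add: g_def)
qed

lemma W_cont: "continuous_on {0..lmax} (W s2 mu)"
proof -
  have "continuous_on {0..lmax} (\<lambda>x. s2 * x / (2 * (1 - x / mu)) + 1 / mu)"
    using mu_pos lmax_lt by (intro continuous_intros) (auto simp: field_simps)
  then show ?thesis by (simp add: W_def[abs_def])
qed

lemma lb: "0 \<le> lambda_bar s2 mu D \<and> lambda_bar s2 mu D < mu \<and> W s2 mu (lambda_bar s2 mu D) = g 1"
proof -
  have "0 < s2 * m / 2" using mean_pos s2_pos by simp
  then have lo: "W s2 mu 0 \<le> g 1" using g_lin[of 1] by (simp add: W_zero)
  have "g 1 \<le> expectation (\<lambda>x. W s2 mu lmax)"
    unfolding g_def
  proof (rule integral_mono_AE)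
    show "integrable D (\<lambda>x. W s2 mu (1*x))" using int_W[of 1] by simp
    show "AE x in D. W s2 mu (1 * x) \<le> W s2 mu lmax"
      using range by eventually_elim (use W_mono mu_pos s2_pos lmax_lt in auto)
  qed simp
  then have hi: "g 1 \<le> W s2 mu lmax" by (simp add: prob_space)
  obtain l where l: "0 \<le> l" "l \<le> lmax" "W s2 mu l = g 1"
    using IVT'[of "W s2 mu" 0 "g 1" lmax, OF lo hi lmax_nn W_cont] by auto
  have ex: "\<exists>!l. 0 \<le> l \<and> l < mu \<and> W s2 mu l = expectation (\<lambda>x. W s2 mu x)"
  proof (rule ex1I[of _ l])
    show "0 \<le> l \<and> l < mu \<and> W s2 mu l = expectation (\<lambda>x. W s2 mu x)" using l lmax_lt g1 by auto
    fix r assume r: "0 \<le> r \<and> r < mu \<and> W s2 mu r = expectation (\<lambda>x. W s2 mu x)"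
    show "r = l"
    proof (rule ccontr)
      assume "r \<noteq> l"
      then have "r < l \<or> l < r" by auto
      then show False using W_strict[of mu r l s2] W_strict[of mu l r s2] l r mu_pos s2_pos lmax_lt g1 by auto
    qed
  qed
  from theI'[OF ex] show ?thesis unfolding lambda_bar_def by (simp add: g1)
qed

lemma m_le_lb: "m \<le> lambda_bar s2 mu D"
proof (rule ccontr)
  assume "\<not> ?thesis"
  then have "W s2 mu (lambda_bar s2 mu D) < W s2 mu m"
    using W_strict[of mu "lambda_bar s2 mu D" m s2] lb mu_pos s2_pos m_le lmax_lt by auto
  moreover have "W s2 mu m \<le> g 1" using g_jensen[of 1] by simp
  ultimately show False using lb by simp
qed

end

lemma xi_props: assumes C: "C > 0" and mu: "mu > 0" and s2: "s2 > 0" and p: "p < R - C/mu"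
  shows "0 < xi s2 mu R C p \<and> xi s2 mu R C p < mu \<and> C * W s2 mu (xi s2 mu R C p) = R - p"
proof -
  define b where "b = R - p - C/mu"
  have b: "b > 0" using p by (simp add: b_def)
  define t where "t = C * s2 / (2 * b) + 1/mu"
  have t1: "C * s2 / (2 * b) > 0" using b C s2 by simp
  have t: "t > 1/mu" using t1 by (simp add: t_def)
  have tp: "t > 0" using t mu by (smt (verit) divide_pos_pos)
  have x: "xi s2 mu R C p = 1/t" by (simp add: xi_def t_def b_def inverse_eq_divide)
  have "1/t < mu" using t mu tp by (simp add: field_simps)
  moreover have "C * W s2 mu (1/t) = R - p"
  proof -
    have tm: "t * mu - 1 = C * s2 * mu / (2 * b)" using mu by (simp add: t_def field_simps)
    have "1 - (1/t)/mu = (t*mu - 1)/(t*mu)" using mu tp by (simp add: field_simps)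
    also have "\<dots> = C * s2 / (2 * b * t)" unfolding tm using mu tp b by (simp add: field_simps)
    finally have d: "1 - (1/t)/mu = C * s2 / (2 * b * t)" .
    have "s2 * (1/t) / (2 * (1 - (1/t)/mu)) = b / C"
      unfolding d using tp b C s2 by (simp add: field_simps)
    then have "W s2 mu (1/t) = b/C + 1/mu" by (simp add: W_def)
    then show ?thesis using C by (simp add: b_def field_simps)
  qed
  ultimately show ?thesis using x tp by simp
qed

lemma AE_le_sup: fixes D :: "real measure" assumes P: "prob_space D" and S: "sets D = sets borel"
  and sup: "\<forall>x\<in>dist_support D. x \<le> lmax"
  shows "AE x in D. x \<le> lmax"
proof -
  interpret prob_space D by (rule P)
  have "\<forall>y. \<exists>e. lmax < y \<longrightarrow> e > 0 \<and> ball y e \<in> null_sets D"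
  proof
    fix y show "\<exists>e. lmax < y \<longrightarrow> 0 < e \<and> ball y e \<in> null_sets D"
    proof (cases "lmax < y")
      case True
      then have "y \<notin> dist_support D" using sup by force
      then obtain e where e: "e > 0" "\<not> measure D {y - e<..<y + e} > 0"
        unfolding dist_support_def by auto
      have "measure D {y - e<..<y + e} = 0" using e(2) measure_nonneg[of D "{y - e<..<y + e}"]
        by linarith
      then have "measure D (ball y e) = 0" by (simp add: ball_eq_greaterThanLessThan)
      moreover have "ball y e \<in> sets D" using S by simp
      ultimately have "ball y e \<in> null_sets D" by (auto intro!: null_setsI simp: emeasure_eq_measure)
      then show ?thesis using e by auto
    qed auto
  qed
  then obtain e where e: "\<And>y. lmax < y \<Longrightarrow> e y > 0 \<and> ball y (e y) \<in> null_sets D" by metis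
  define K where "K n = {lmax + 1/(real n + 1) .. lmax + real n}" for n :: nat
  have Kgt: "y \<in> K n \<Longrightarrow> lmax < y" for y n
  proof -
    assume "y \<in> K n"
    then have "lmax + 1/(real n + 1) \<le> y" unfolding K_def by auto
    moreover have "0 < 1/(real n + 1)" by simp
    ultimately show ?thesis by linarith
  qed
  have Kn: "K n \<in> null_sets D" for n
  proof -
    have cK: "compact (K n)" by (simp add: K_def)
    have cov: "K n \<subseteq> (\<Union>y\<in>K n. ball y (e y))"
    proof
      fix y assume "y \<in> K n"
      then have "e y > 0" using e Kgt by auto
      then have "y \<in> ball y (e y)" by simp
      then show "y \<in> (\<Union>y\<in>K n. ball y (e y))" using \<open>y \<in> K n\<close> by blast
    qed
    obtain F where F: "F \<subseteq> K n" "finite F" "K n \<subseteq> (\<Union>y\<in>F. ball y (e y))"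
      using compactE_image[OF cK _ cov] by auto
    have "(\<Union>y\<in>F. ball y (e y)) \<in> null_sets D"
      using F e Kgt by (intro null_sets.finite_UN) auto
    moreover have "K n \<in> sets D" using S by (simp add: K_def)
    ultimately show ?thesis using null_sets_subset F(3) by blast
  qed
  have "(\<Union>n. K n) \<in> null_sets D" using Kn by auto
  moreover have "{x \<in> space D. \<not> x \<le> lmax} \<subseteq> (\<Union>n. K n)"
  proof
    fix x assume "x \<in> {x \<in> space D. \<not> x \<le> lmax}"
    then have x: "lmax < x" by auto
    obtain n1 :: nat where n1: "n1 > 0" "inverse (real n1) < x - lmax"
      using ex_inverse_of_nat_less[of "x - lmax"] x by auto
    obtain n2 :: nat where n2: "x - lmax < real n2" using reals_Archimedean2 by auto
    define n where "n = max n1 n2"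
    have "1/(real n + 1) \<le> 1/real n1" using n1 by (intro divide_left_mono) (auto simp: n_def)
    then have "1/(real n + 1) < x - lmax" using n1 by (simp add: inverse_eq_divide)
    moreover have "x - lmax < real n" using n2 by (simp add: n_def)
    ultimately have "x \<in> K n" by (simp add: K_def)
    then show "x \<in> (\<Union>n. K n)" by auto
  qed
  ultimately show ?thesis by (rule AE_I')
qed

theorem proposition5:
  fixes lam mu s2 R C lmin lmax :: real and D :: "real measure"
  assumes lam_pos: "lam > 0" and mu_pos: "mu > 0"
    and s2_ge: "s2 \<ge> 1 / mu ^ 2"
    and C_pos: "C > 0" and R_ge: "R \<ge> C / mu"
    and D_prob: "prob_space D" and D_sets: "sets D = sets borel"
    and D_nonneg: "AE x in D. x \<ge> 0"
    and D_nondeg: "\<not> (\<exists>c. AE x in D. x = c)"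
    and lmin_supp: "lmin \<in> dist_support D" and lmin_least: "\<forall>x\<in>dist_support D. lmin \<le> x"
    and lmax_supp: "lmax \<in> dist_support D" and lmax_greatest: "\<forall>x\<in>dist_support D. x \<le> lmax"
    and order: "0 \<le> lmin" "lmin < lam" "lam < lmax" "lmax < mu"
  shows
    "(\<forall>p. 0 \<le> p \<and> p < R - C / mu \<longrightarrow>
        ((lam \<le> (\<integral>x. x \<partial>D) \<longrightarrow> RevS s2 mu R C lam D p \<le> RevC s2 mu R C lam p) \<and>
         ((\<integral>x. x \<partial>D) < lam \<and> lam \<le> lambda_bar s2 mu D \<and> xi s2 mu R C p \<ge> lam \<longrightarrow>
            RevS s2 mu R C lam D p \<le> RevC s2 mu R C lam p) \<and>
         (lam > lambda_bar s2 mu D \<and> xi s2 mu R C p \<ge> lambda_bar s2 mu D \<longrightarrow>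
            RevS s2 mu R C lam D p \<ge> RevC s2 mu R C lam p)))
     \<and> (lam > (\<integral>x. x \<partial>D) \<longrightarrow>
          (\<exists>q0>0. \<forall>q. 0 < q \<and> q < q0 \<longrightarrow> RevSq s2 mu R C lam D q > RevCq s2 mu R C lam q))
     \<and> (lam < (\<integral>x. x \<partial>D) \<longrightarrow>
          (\<exists>q0>0. \<forall>q. 0 < q \<and> q < q0 \<longrightarrow> RevSq s2 mu R C lam D q < RevCq s2 mu R C lam q))"
proof -
  have s2pos: "0 < s2"
  proof -
    have "0 < 1/mu^2" using mu_pos by simp
    then show ?thesis using s2_ge by linarith
  qed
  have le_sup: "AE x in D. x \<le> lmax" by (rule AE_le_sup[OF D_prob D_sets lmax_greatest])
  have rng: "AE x in D. 0 \<le> x \<and> x \<le> lmax" using D_nonneg le_sup by eventually_elim auto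
  have nd0: "\<not> (AE x in D. x = 0)" using D_nondeg by blast
  have lmax_nn: "0 \<le> lmax" using order lam_pos by linarith
  interpret Q: qsetup D s2 mu lmax
    by (rule qsetup.intro[OF D_prob], rule qsetup_axioms.intro)
       (use D_sets s2pos mu_pos order lmax_nn rng nd0 in auto)
  define lb where "lb = lambda_bar s2 mu D"
  define m where "m = (\<integral>x. x \<partial>D)"
  have lbp: "0 \<le> lb" "lb < mu" "W s2 mu lb = Q.g 1" using Q.lb by (auto simp: lb_def)
  have mlb: "m \<le> lb" using Q.m_le_lb by (simp add: lb_def m_def)
  have mpos: "0 < m" using Q.mean_pos by (simp add: m_def)
  have mle: "m \<le> lmax" using Q.m_le by (simp add: m_def)
  have g1: "(\<integral>x. W s2 mu x \<partial>D) = Q.g 1" by (simp add: Q.g1)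
  have part1: "\<forall>p. 0 \<le> p \<and> p < R - C / mu \<longrightarrow>
        ((lam \<le> m \<longrightarrow> RevS s2 mu R C lam D p \<le> RevC s2 mu R C lam p) \<and>
         (m < lam \<and> lam \<le> lb \<and> xi s2 mu R C p \<ge> lam \<longrightarrow>
            RevS s2 mu R C lam D p \<le> RevC s2 mu R C lam p) \<and>
         (lam > lb \<and> xi s2 mu R C p \<ge> lb \<longrightarrow>
            RevS s2 mu R C lam D p \<ge> RevC s2 mu R C lam p))"
  proof (intro allI impI)
    fix p assume p: "0 \<le> p \<and> p < R - C / mu"
    define x where "x = xi s2 mu R C p"
    have xp: "0 < x" "x < mu" "C * W s2 mu x = R - p"
      using xi_props[OF C_pos mu_pos s2pos, of p R] p by (auto simp: x_def)
    have Wiff: "W s2 mu lb \<le> W s2 mu x \<longleftrightarrow> lb \<le> x"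
    proof
      assume "W s2 mu lb \<le> W s2 mu x"
      then show "lb \<le> x" using W_strict[of mu x lb s2] xp lbp mu_pos s2pos by force
    next
      assume "lb \<le> x"
      then show "W s2 mu lb \<le> W s2 mu x" using W_mono[of mu lb x s2] xp lbp mu_pos s2pos by force
    qed
    have key: "C * (\<integral>x. W s2 mu x \<partial>D) \<le> R - p \<longleftrightarrow> lb \<le> x"
      unfolding g1 using Wiff lbp xp C_pos by (metis mult_le_cancel_left_pos)
    define qs where "qs = qS s2 mu R C D p"
    have qs_cases: "(qs = 1 \<and> lb \<le> x) \<or> (0 \<le> qs \<and> qs < 1 \<and> C * Q.g qs = R - p \<and> \<not> lb \<le> x)"
    proof (cases "lb \<le> x")
      case True
      then show ?thesis using key by (simp add: qs_def qS_def)
    next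
      case False
      have lo: "C / mu < R - p" using p by simp
      have hi: "\<not> C * (\<integral>x. W s2 mu x \<partial>D) \<le> R - p" using key False by simp
      show ?thesis using Q.qS_root[OF C_pos lo hi] False hi by (simp add: qs_def qS_def)
    qed
    have qs01: "0 \<le> qs" "qs \<le> 1" using qs_cases by auto
    define qc where "qc = qC s2 mu R C lam p"
    have qc: "qc = min (x/lam) 1" by (simp add: qc_def qC_def x_def)
    have plam: "0 \<le> p * lam" using p lam_pos by simp
    have RS: "RevS s2 mu R C lam D p = p * lam * qs" by (simp add: RevS_def qs_def)
    have RC: "RevC s2 mu R C lam p = p * lam * qc" by (simp add: RevC_def qc_def)
    have easy: "RevS s2 mu R C lam D p \<le> RevC s2 mu R C lam p" if "lam \<le> x"
    proof -
      have "1 \<le> x/lam" using that lam_pos by simp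
      then have "qc = 1" using qc by simp
      then show ?thesis unfolding RS RC using qs01 plam by (simp add: mult_left_le)
    qed
    show "(lam \<le> m \<longrightarrow> RevS s2 mu R C lam D p \<le> RevC s2 mu R C lam p) \<and>
         (m < lam \<and> lam \<le> lb \<and> xi s2 mu R C p \<ge> lam \<longrightarrow>
            RevS s2 mu R C lam D p \<le> RevC s2 mu R C lam p) \<and>
         (lam > lb \<and> xi s2 mu R C p \<ge> lb \<longrightarrow>
            RevS s2 mu R C lam D p \<ge> RevC s2 mu R C lam p)"
    proof (intro conjI impI)
      assume lm: "lam \<le> m"
      show "RevS s2 mu R C lam D p \<le> RevC s2 mu R C lam p"
      proof (cases "lam \<le> x")
        case True then show ?thesis by (rule easy)
      next
        case False
        then have xl: "x < lam" by simp
        then have "\<not> lb \<le> x" using lm mlb by linarith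
        then have q: "0 \<le> qs" "qs < 1" "C * Q.g qs = R - p" using qs_cases by auto
        have "C * Q.g qs = C * W s2 mu x" using q(3) xp(3) by linarith
        then have gq: "Q.g qs = W s2 mu x" using C_pos by simp
        have jen: "W s2 mu (qs * m) \<le> W s2 mu x" using Q.g_jensen[of qs] q gq by (simp add: m_def)
        have qm_lt: "qs * m < mu" using qx_le[of qs m lmax] q mpos mle order by linarith
        have "qs * m \<le> x"
        proof (rule ccontr)
          assume "\<not> qs * m \<le> x"
          then have "W s2 mu x < W s2 mu (qs * m)" using W_strict[of mu x "qs*m" s2] xp qm_lt mu_pos s2pos by auto
          then show False using jen by simp
        qed
        moreover have "qs * lam \<le> qs * m" using lm q by (intro mult_left_mono) auto
        ultimately have "qs * lam \<le> x" by simp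
        then have "qs \<le> x / lam" using lam_pos by (simp add: pos_le_divide_eq)
        moreover have "qc = x / lam" using qc xl lam_pos by simp
        ultimately have "qs \<le> qc" by simp
        then show ?thesis unfolding RS RC using plam by (rule mult_left_mono)
      qed
    next
      assume "m < lam \<and> lam \<le> lb \<and> xi s2 mu R C p \<ge> lam"
      then show "RevS s2 mu R C lam D p \<le> RevC s2 mu R C lam p" using easy by (simp add: x_def)
    next
      assume a: "lam > lb \<and> xi s2 mu R C p \<ge> lb"
      then have "qs = 1" using qs_cases by (auto simp: x_def)
      moreover have "qc \<le> 1" using qc by simp
      ultimately show "RevS s2 mu R C lam D p \<ge> RevC s2 mu R C lam p"
        unfolding RS RC using plam by (simp add: mult_left_le)
    qed
  qed
  have RSq: "RevSq s2 mu R C lam D q = q * lam * (R - C * Q.g q)" if "0 \<le> q" "q \<le> 1" for q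
  proof -
    have "(\<integral>x. (R - C * W s2 mu (q * x)) \<partial>D) = R - C * Q.g q"
      by (subst Bochner_Integration.integral_diff) (use Q.int_W[OF that] in \<open>auto simp: Q.g_def Q.prob_space\<close>)
    then show ?thesis by (simp add: RevSq_def)
  qed
  have diff: "RevSq s2 mu R C lam D q - RevCq s2 mu R C lam q = (q * lam * C) * (W s2 mu (q * lam) - Q.g q)"
    if "0 \<le> q" "q \<le> 1" for q
    using RSq[OF that] by (simp add: RevCq_def algebra_simps)
  define K where "K = lmax^2/(mu - lmax)"
  have K: "0 \<le> K" using order by (simp add: K_def)
  have part2: "lam > m \<longrightarrow>
          (\<exists>q0>0. \<forall>q. 0 < q \<and> q < q0 \<longrightarrow> RevSq s2 mu R C lam D q > RevCq s2 mu R C lam q)"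
  proof
    assume lm: "lam > m"
    define q0 where "q0 = min 1 ((lam - m)/(K + 1))"
    have q0: "0 < q0" using lm K by (simp add: q0_def)
    show "\<exists>q0>0. \<forall>q. 0 < q \<and> q < q0 \<longrightarrow> RevSq s2 mu R C lam D q > RevCq s2 mu R C lam q"
    proof (intro exI[of _ q0] conjI allI impI q0)
      fix q assume q: "0 < q \<and> q < q0"
      then have q1: "0 \<le> q" "q \<le> 1" by (auto simp: q0_def)
      have "q < (lam - m)/(K + 1)" using q by (simp add: q0_def)
      then have "q * (K + 1) < lam - m" using K by (simp add: less_divide_eq)
      then have "q * K < lam - m" using q by (simp add: algebra_simps)
      then have "q * (q * K) < q * (lam - m)" using q by (intro mult_strict_left_mono) auto
      then have "q * m + q^2 * K < q * lam" by (simp add: power2_eq_square algebra_simps)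
      then have lt: "s2/2 * (q * m + q^2 * K) + 1/mu < s2/2 * (q * lam) + 1/mu" using s2pos by simp
      have gq: "Q.g q \<le> s2/2 * (q * m + q^2 * K) + 1/mu" using Q.g_quad[OF q1] by (simp add: K_def m_def)
      have "q * lam \<le> lam" using q1 lam_pos by (simp add: mult_left_le_one_le)
      then have ql: "q * lam < mu" using order by linarith
      have Wl: "s2/2 * (q * lam) + 1/mu \<le> W s2 mu (q * lam)"
        using W_lin_lower[of mu "q*lam" s2] ql q1 lam_pos mu_pos s2pos by simp
      have "0 < W s2 mu (q * lam) - Q.g q" using gq lt Wl by linarith
      moreover have "0 < q * lam * C" using q lam_pos C_pos by simp
      ultimately have "0 < (q * lam * C) * (W s2 mu (q * lam) - Q.g q)" by simp
      then show "RevSq s2 mu R C lam D q > RevCq s2 mu R C lam q" using diff[OF q1] by simp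
    qed
  qed
  have part3: "lam < m \<longrightarrow>
          (\<exists>q0>0. \<forall>q. 0 < q \<and> q < q0 \<longrightarrow> RevSq s2 mu R C lam D q < RevCq s2 mu R C lam q)"
  proof
    assume lm: "lam < m"
    define q0 where "q0 = min 1 ((m - lam)/(K + 1))"
    have q0: "0 < q0" using lm K by (simp add: q0_def)
    show "\<exists>q0>0. \<forall>q. 0 < q \<and> q < q0 \<longrightarrow> RevSq s2 mu R C lam D q < RevCq s2 mu R C lam q"
    proof (intro exI[of _ q0] conjI allI impI q0)
      fix q assume q: "0 < q \<and> q < q0"
      then have q1: "0 \<le> q" "q \<le> 1" by (auto simp: q0_def)
      have "q < (m - lam)/(K + 1)" using q by (simp add: q0_def)
      then have "q * (K + 1) < m - lam" using K by (simp add: less_divide_eq)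
      then have "q * K < m - lam" using q by (simp add: algebra_simps)
      then have "q * (q * K) < q * (m - lam)" using q by (intro mult_strict_left_mono) auto
      then have "q * lam + q^2 * K < q * m" by (simp add: power2_eq_square algebra_simps)
      then have lt: "s2/2 * (q * lam + q^2 * K) + 1/mu < s2/2 * (q * m) + 1/mu" using s2pos by simp
      have gq: "s2/2 * (q * m) + 1/mu \<le> Q.g q" using Q.g_lin[OF q1] by (simp add: m_def)
      have Wl: "W s2 mu (q * lam) \<le> s2/2 * (q * lam + q^2 * K) + 1/mu"
        using W_quad[of mu q lam lmax s2] q1 lam_pos mu_pos s2pos order by (simp add: K_def)
      have "W s2 mu (q * lam) - Q.g q < 0" using gq lt Wl by linarith
      moreover have "0 < q * lam * C" using q lam_pos C_pos by simp
      ultimately have "(q * lam * C) * (W s2 mu (q * lam) - Q.g q) < 0" by (simp add: mult_pos_neg)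
      then show "RevSq s2 mu R C lam D q < RevCq s2 mu R C lam q" using diff[OF q1] by simp
    qed
  qed
  show ?thesis using part1 part2 part3 unfolding lb_def m_def by blast
qed

end
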